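(* Let $z,w\in H^2$ be distinct points of the hyperbolic plane and $k\in\mathbb R$. Define the square hyperbola $S_k(z,w)=\{x\in H^2 : d_H(x,z)^2-d_H(x,w)^2=k\}$. Then the endpoints on the ideal boundary of $H^2$ of $S_k(z,w)$ are the same as the endpoints of the equidistant line $S_0(z,w)=\{x\in H^2: d_H(x,z)=d_H(x,w)\}$.
   Context: $d_H$ denotes the hyperbolic distance on $H^2$. *)

theory Defs
  imports Complex_Main
begin

definition hyp_plane :: "complex set" where
  "hyp_plane = {z. Im z > 0}"

definition dH :: "complex \<Rightarrow> complex \<Rightarrow> real" where
  "dH z w = arcosh (1 + (cmod (z - w))\<^sup>2 / (2 * Im z * Im w))"

definition square_hyperbola :: "real \<Rightarrow> complex \<Rightarrow> complex \<Rightarrow> complex set" where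
  "square_hyperbola k z w = {x \<in> hyp_plane. (dH x z)\<^sup>2 - (dH x w)\<^sup>2 = k}"

definition equidistant_line :: "complex \<Rightarrow> complex \<Rightarrow> complex set" where
  "equidistant_line z w = {x \<in> hyp_plane. dH x z = dH x w}"

text \<open>Ideal boundary of H^2 = R \<union> {\<infinity>}, encoded as real option (None = \<infinity>).
  The endpoints of a subset S of H^2 are the ideal boundary points that are limits
  of sequences in S (in the closure of the upper half-plane in the Riemann sphere).\<close>
definition ideal_endpoints :: "complex set \<Rightarrow> real option set" where
  "ideal_endpoints S =
     {Some r | r. \<exists>X. (\<forall>n. X n \<in> S) \<and> X \<longlonglongrightarrow> complex_of_real r}
     \<union> {None | u::unit. \<exists>X. (\<forall>n. X n \<in> S) \<and> filterlim (\<lambda>n. cmod (X n)) at_top sequentially}"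

end

theory Submission
  imports Defs "HOL-Real_Asymp.Real_Asymp"
begin


lemma key_ineq:
  fixes P Q c :: real
  assumes Q1: "1 \<le> Q" and c0: "0 < c" and PQ: "Q * exp c \<le> P"
  shows "c * ln P \<le> (arcosh P)^2 - (arcosh Q)^2"
proof -
  define a where "a = arcosh P"
  define b where "b = arcosh Q"
  have "exp c \<ge> 1" using c0 by simp
  hence P1: "P \<ge> 1" using Q1 PQ by (smt (verit) mult_le_cancel_left1)
  have b0: "b \<ge> 0" unfolding b_def using Q1 by simp
  have a0: "a \<ge> 0" unfolding a_def using P1 by simp
  have cb: "cosh b = Q" unfolding b_def using Q1 by simp
  have ca: "cosh a = P" unfolding a_def using P1 by simp
  have sb: "sinh b \<le> cosh b" by (rule sinh_le_cosh_real)
  have sc: "sinh c \<ge> 0" using c0 by simp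
  have "cosh (b + c) = cosh b * cosh c + sinh b * sinh c" by (rule cosh_add)
  also have "\<dots> \<le> cosh b * cosh c + cosh b * sinh c"
    using sb sc by (simp add: mult_right_mono)
  also have "\<dots> = Q * exp c" using cb by (simp add: cosh_plus_sinh[symmetric] algebra_simps)
  finally have "cosh (b+c) \<le> P" using PQ by simp
  hence "arcosh (cosh (b+c)) \<le> arcosh P"
    using P1 cosh_real_ge_1[of "b+c"] arcosh_less_iff_real[of P "cosh (b+c)"] by linarith
  hence bc: "b + c \<le> a" unfolding a_def using arcosh_cosh_real[of "b+c"] b0 c0 by simp
  have lnP: "ln P \<le> a" unfolding a_def using P1
    by (simp add: arcosh_real_def, subst ln_le_cancel_iff) (auto intro!: add_pos_nonneg)
  have "a^2 - b^2 = (a - b) * (a + b)" by (simp add: power2_eq_square algebra_simps)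
  also have "\<dots> \<ge> c * a" using bc b0 c0 a0 by (intro mult_mono) auto
  finally show ?thesis using lnP c0 a_def b_def
    by (smt (verit) mult_left_mono)
qed

lemma absaux: fixes a b :: real shows "\<bar>a - b\<bar> < (b - 1) / 2 \<Longrightarrow> (1 + b) / 2 < a"
  using abs_ge_minus_self[of "a - b"] by (simp add: field_simps)

definition Nf :: "complex \<Rightarrow> complex \<Rightarrow> real" where
  "Nf z x = (Re x - Re z)^2 + (Im x)^2 + (Im z)^2"
definition FF :: "complex \<Rightarrow> complex \<Rightarrow> complex \<Rightarrow> real" where
  "FF z w x = (dH x z)^2 - (dH x w)^2"
definition gg :: "complex \<Rightarrow> complex \<Rightarrow> real \<Rightarrow> real" where
  "gg z w s = ((s - Re z)^2 + (Im z)^2) * Im w - ((s - Re w)^2 + (Im w)^2) * Im z"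

lemma dH_eq: assumes "Im x > 0" "Im z > 0"
  shows "dH x z = arcosh (Nf z x / (2 * Im x * Im z))"
proof -
  have "(cmod (x - z))^2 = (Re x - Re z)^2 + (Im x - Im z)^2" by (simp add: cmod_power2)
  hence "1 + (cmod (x - z))\<^sup>2 / (2 * Im x * Im z) = Nf z x / (2 * Im x * Im z)"
    using assms unfolding Nf_def by (simp add: field_simps power2_eq_square)
  thus ?thesis unfolding dH_def by simp
qed

lemma FF_swap: "FF w z x = - FF z w x" unfolding FF_def by simp
lemma gg_swap: "gg w z s = - gg z w s" unfolding gg_def by simp

lemma L1:
  assumes z0: "Im z > 0" and w0: "Im w > 0" and g: "gg z w r > 0"
  shows "\<exists>\<delta>>0. \<forall>x. Im x > 0 \<longrightarrow> cmod (x - of_real r) < \<delta> \<longrightarrow> K \<le> FF z w x"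
proof -
  define h where "h x = Nf z x * Im w / (Nf w x * Im z)" for x
  have Nw: "Nf w x > 0" for x unfolding Nf_def using w0
    by (smt (verit) zero_le_power2 zero_less_power)
  define \<rho> where "\<rho> = h (of_real r)"
  have "Nf z (of_real r) * Im w > Nf w (of_real r) * Im z"
    using g unfolding gg_def Nf_def by simp
  hence \<rho>1: "\<rho> > 1" unfolding \<rho>_def h_def using Nw[of "of_real r"] z0
    by (simp add: field_simps)
  have "isCont h (of_real r)" unfolding h_def Nf_def
    using Nw[of "of_real r"] z0 unfolding Nf_def
    by (intro continuous_intros) auto
  hence "h \<midarrow>(of_real r)\<rightarrow> \<rho>" unfolding \<rho>_def isCont_def .
  then obtain \<delta>1 where d1: "\<delta>1 > 0" and
    d1h: "\<And>x. x \<noteq> of_real r \<and> norm (x - of_real r) < \<delta>1 \<Longrightarrow> norm (h x - \<rho>) < (\<rho> - 1)/2"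
    unfolding LIM_eq using \<rho>1 by (metis diff_gt_0_iff_gt half_gt_zero)
  define c where "c = ln ((1 + \<rho>)/2)"
  have c0: "c > 0" unfolding c_def using \<rho>1 by simp
  have ec: "exp c = (1 + \<rho>)/2" unfolding c_def using \<rho>1 by simp
  define \<delta> where "\<delta> = min \<delta>1 (Im z / (2 * exp (K / c)))"
  have \<delta>0: "\<delta> > 0" unfolding \<delta>_def using d1 z0 by simp
  show ?thesis
  proof (intro exI[of _ \<delta>] conjI allI impI \<delta>0)
    fix x assume x0: "Im x > 0" and xd: "cmod (x - of_real r) < \<delta>"
    have xne: "x \<noteq> of_real r" using x0 by auto
    have "norm (h x - \<rho>) < (\<rho> - 1)/2" using d1h[of x] xne xd unfolding \<delta>_def by simp
    hence hx: "h x > exp c" unfolding ec real_norm_def by (rule absaux)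
    define P where "P = Nf z x / (2 * Im x * Im z)"
    define Q where "Q = Nf w x / (2 * Im x * Im w)"
    have "Nf w x \<ge> (Im x)^2 + (Im w)^2" unfolding Nf_def by simp
    moreover have "(Im x)^2 + (Im w)^2 \<ge> 2 * Im x * Im w"
      by (smt (verit) sum_squares_bound)
    ultimately have Q1: "Q \<ge> 1" unfolding Q_def using x0 w0 by (simp add: field_simps)
    have PhQ: "P = h x * Q" unfolding P_def Q_def h_def using x0 w0 z0 Nw[of x]
      by (simp add: field_simps)
    have "Q * exp c \<le> P" using PhQ hx Q1 by (simp add: mult.commute mult_left_mono)
    from key_ineq[OF Q1 c0 this]
    have FFc: "c * ln P \<le> FF z w x"
      unfolding FF_def P_def Q_def using dH_eq[OF x0 z0] dH_eq[OF x0 w0] by simp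
    have "Im x \<le> cmod (x - of_real r)" using abs_Im_le_cmod[of "x - of_real r"] by simp
    hence "Im x < Im z / (2 * exp (K / c))" using xd unfolding \<delta>_def by simp
    hence "exp (K/c) < Im z / (2 * Im x)" using x0 z0 by (simp add: field_simps)
    also have "Im z / (2 * Im x) \<le> P"
    proof -
      have "(Im z)^2 \<le> Nf z x" unfolding Nf_def by simp
      hence "(Im z)^2/(2*Im x*Im z) \<le> Nf z x/(2*Im x*Im z)"
        using x0 z0 by (intro divide_right_mono) auto
      moreover have "(Im z)^2/(2*Im x*Im z) = Im z/(2*Im x)" using x0 z0
        by (simp add: power2_eq_square)
      ultimately show ?thesis unfolding P_def by simp
    qed
    finally have "K / c < ln P" by (smt (verit) exp_gt_zero ln_exp ln_less_cancel_iff)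
    hence "K < c * ln P" using c0 by (simp add: field_simps)
    thus "K \<le> FF z w x" using FFc by simp
  qed
qed

lemma L1':
  assumes z0: "Im z > 0" and w0: "Im w > 0" and g: "gg z w r < 0"
  shows "\<exists>\<delta>>0. \<forall>x. Im x > 0 \<longrightarrow> cmod (x - of_real r) < \<delta> \<longrightarrow> FF z w x \<le> K"
proof -
  have "gg w z r > 0" using g gg_swap[of z w r] by linarith
  from L1[OF w0 z0 this, of "-K"] obtain \<delta> where
    "\<delta> > 0" and *: "\<forall>x. Im x > 0 \<longrightarrow> cmod (x - of_real r) < \<delta> \<longrightarrow> - K \<le> FF w z x" by blast
  show ?thesis using \<open>\<delta> > 0\<close>
  proof (intro exI[of _ \<delta>] conjI allI impI)
    fix x assume "Im x > 0" "cmod (x - of_real r) < \<delta>"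
    hence "- K \<le> FF w z x" using * by blast
    thus "FF z w x \<le> K" using FF_swap[of w z x] by linarith
  qed
qed


lemma core:
  assumes x0: "Im x > 0" and z0: "Im z > 0" and w0: "Im w > 0" and c0: "c > 0"
    and hx: "exp c * (Nf w x * Im z) \<le> Nf z x * Im w"
    and Pb: "exp (K/c) < Nf z x / (2*Im x*Im z)"
  shows "K \<le> FF z w x"
proof -
  define P where "P = Nf z x / (2 * Im x * Im z)"
  define Q where "Q = Nf w x / (2 * Im x * Im w)"
  have "Nf w x \<ge> (Im x)^2 + (Im w)^2" unfolding Nf_def by simp
  moreover have "(Im x)^2 + (Im w)^2 \<ge> 2 * Im x * Im w"
    by (smt (verit) sum_squares_bound)
  ultimately have Q1: "Q \<ge> 1" unfolding Q_def using x0 w0 by (simp add: field_simps)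
  have "Q * exp c \<le> P" unfolding P_def Q_def using x0 w0 z0 hx
    by (simp add: field_simps)
  from key_ineq[OF Q1 c0 this]
  have FFc: "c * ln P \<le> FF z w x"
    unfolding FF_def P_def Q_def using dH_eq[OF x0 z0] dH_eq[OF x0 w0] by simp
  have "K / c < ln P" using Pb unfolding P_def
    by (smt (verit) exp_gt_zero ln_exp ln_less_cancel_iff)
  hence "K < c * ln P" using c0 by (simp add: field_simps)
  thus "K \<le> FF z w x" using FFc by simp
qed

lemma L2:
  assumes z0: "Im z > 0" and w0: "Im w > 0" and zw: "Im z < Im w"
  shows "\<exists>B. \<forall>x. Im x > 0 \<longrightarrow> B < cmod x \<longrightarrow> K \<le> FF z w x"
proof -
  define \<rho> where "\<rho> = Im w / Im z"
  have \<rho>1: "\<rho> > 1" unfolding \<rho>_def using z0 zw by simp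
  define \<theta> where "\<theta> = (1 + \<rho>) / (2 * \<rho>)"
  have \<theta>1: "\<theta> < 1" unfolding \<theta>_def using \<rho>1 by simp
  define c where "c = ln ((1 + \<rho>)/2)"
  have c0: "c > 0" unfolding c_def using \<rho>1 by simp
  have ec: "exp c = (1 + \<rho>)/2" unfolding c_def using \<rho>1 by simp
  define a1 where "a1 = \<bar>Re z\<bar>"
  define b1 where "b1 = \<bar>Re w\<bar>"
  define C where "C = (cmod w)^2"
  have lim: "((\<lambda>t. (t^2 - 2*t*a1) / (t^2 + 2*t*b1 + C)) \<longlongrightarrow> 1) at_top"
    by real_asymp
  have ev1: "eventually (\<lambda>t. \<theta> < (t^2 - 2*t*a1) / (t^2 + 2*t*b1 + C)) at_top"
    using order_tendstoD(1)[OF lim \<theta>1] .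
  have ev2: "eventually (\<lambda>t. 2*a1 + 2 * Im z * exp (K/c) + 1 < t) at_top"
    by (rule eventually_gt_at_top)
  obtain B where B: "\<And>t. t \<ge> B \<Longrightarrow> \<theta> < (t^2 - 2*t*a1) / (t^2 + 2*t*b1 + C) \<and>
       2*a1 + 2 * Im z * exp (K/c) + 1 < t"
    using eventually_conj[OF ev1 ev2] unfolding eventually_at_top_linorder by blast
  show ?thesis
  proof (intro exI[of _ B] allI impI)
    fix x assume x0: "Im x > 0" and xB: "B < cmod x"
    define t where "t = cmod x"
    have Bt: "\<theta> < (t^2 - 2*t*a1) / (t^2 + 2*t*b1 + C)" "2*a1 + 2 * Im z * exp (K/c) + 1 < t"
      using B[of t] xB unfolding t_def by auto
    have a10: "a1 \<ge> 0" "b1 \<ge> 0" "C \<ge> 0" unfolding a1_def b1_def C_def by auto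
    have t2: "t^2 = (Re x)^2 + (Im x)^2" unfolding t_def by (simp add: cmod_power2)
    have rx: "\<bar>Re x\<bar> \<le> t" "Im x \<le> t" unfolding t_def
      using abs_Re_le_cmod abs_Im_le_cmod by (auto simp: abs_le_iff)
    have "\<bar>Re x * Re z\<bar> \<le> t * a1" unfolding a1_def abs_mult
      using rx by (simp add: mult_right_mono)
    moreover have "Nf z x = t^2 - 2*(Re x * Re z) + (Re z)^2 + (Im z)^2"
      unfolding Nf_def t2 by (simp add: power2_eq_square algebra_simps)
    moreover have "2*t*a1 = 2*(t*a1)" by simp
    ultimately have lowz: "t^2 - 2*t*a1 \<le> Nf z x"
      using zero_le_power2[of "Re z"] zero_le_power2[of "Im z"] abs_le_D1[of "Re x * Re z" "t*a1"]
        abs_le_D2[of "Re x * Re z" "t*a1"] by linarith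
    have "\<bar>Re x * Re w\<bar> \<le> t * b1" unfolding b1_def abs_mult
      using rx by (simp add: mult_right_mono)
    moreover have "C = (Re w)^2 + (Im w)^2" unfolding C_def by (simp add: cmod_power2)
    moreover have "Nf w x = t^2 - 2*(Re x * Re w) + (Re w)^2 + (Im w)^2"
      unfolding Nf_def t2 by (simp add: power2_eq_square algebra_simps)
    moreover have "2*t*b1 = 2*(t*b1)" by simp
    ultimately have upw: "Nf w x \<le> t^2 + 2*t*b1 + C"
      using abs_le_D1[of "Re x * Re w" "t*b1"] abs_le_D2[of "Re x * Re w" "t*b1"] by linarith
    have "2 * Im z * exp (K/c) > 0" using z0 by simp
    hence tpos: "t > 2*a1" "t > 0" using Bt(2) a10 by linarith+
    have lpos: "t^2 - 2*t*a1 > 0" using tpos by (simp add: power2_eq_square)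
    have Nwpos: "Nf w x > 0" unfolding Nf_def using w0
      by (smt (verit) zero_le_power2 zero_less_power)
    have "(t^2 - 2*t*a1) / (t^2 + 2*t*b1 + C) \<le> Nf z x / Nf w x"
      using lowz upw lpos Nwpos by (intro frac_le) auto
    hence "\<theta> < Nf z x / Nf w x" using Bt(1) by simp
    hence "\<theta> * Nf w x < Nf z x" using Nwpos by (simp add: field_simps)
    hence th: "\<theta> * Nf w x \<le> Nf z x" by simp
    have e1: "\<rho> * \<theta> = exp c" unfolding ec \<theta>_def using \<rho>1 by simp
    have e2: "\<rho> * Im z = Im w" unfolding \<rho>_def using z0 by simp
    have "exp c * (Nf w x * Im z) = (\<theta> * Nf w x) * (\<rho> * Im z)" unfolding e1[symmetric]
      by (simp add: mult_ac)
    also have "\<dots> \<le> Nf z x * (\<rho> * Im z)" using th \<rho>1 z0 by (intro mult_right_mono) auto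
    finally have hx: "exp c * (Nf w x * Im z) \<le> Nf z x * Im w" unfolding e2 .
    have "exp (K/c) < (t - 2*a1) / (2 * Im z)" using Bt(2) z0 by (simp add: field_simps)
    also have "(t - 2*a1) / (2 * Im z) = (t^2 - 2*t*a1) / (2 * t * Im z)"
      using tpos z0 by (simp add: field_simps power2_eq_square)
    also have "\<dots> \<le> Nf z x / (2 * t * Im z)" using lowz tpos z0
      by (simp add: divide_right_mono)
    also have "\<dots> \<le> Nf z x / (2 * Im x * Im z)" using lowz lpos rx x0 z0
      by (intro divide_left_mono mult_right_mono) auto
    finally show "K \<le> FF z w x" using core[OF x0 z0 w0 c0 hx] by simp
  qed
qed

lemma L2':
  assumes z0: "Im z > 0" and w0: "Im w > 0" and zw: "Im w < Im z"
  shows "\<exists>B. \<forall>x. Im x > 0 \<longrightarrow> B < cmod x \<longrightarrow> FF z w x \<le> K"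
proof -
  from L2[OF w0 z0 zw, of "-K"] obtain B where
    *: "\<forall>x. Im x > 0 \<longrightarrow> B < cmod x \<longrightarrow> - K \<le> FF w z x" by blast
  show ?thesis
  proof (intro exI[of _ B] allI impI)
    fix x assume "Im x > 0" "B < cmod x"
    hence "- K \<le> FF w z x" using * by blast
    thus "FF z w x \<le> K" using FF_swap[of w z x] by linarith
  qed
qed



lemma disc_id:
  "4 * (Im w - Im z) * gg z w r =
     (2*(Im w - Im z)*r + 2*(Re w * Im z - Re z * Im w))^2
     - 4 * Im z * Im w * ((Re z - Re w)^2 + (Im z - Im w)^2)"
  unfolding gg_def by (simp add: power2_eq_square algebra_simps)

lemma gg_shift:
  "gg z w (r + h) = gg z w r + h * ((2*(Im w - Im z)*r + 2*(Re w * Im z - Re z * Im w)) + (Im w - Im z)*h)"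
  unfolding gg_def by (simp add: power2_eq_square algebra_simps)

lemma sign_change:
  assumes z0: "Im z > 0" and w0: "Im w > 0" and zw: "z \<noteq> w" and g: "gg z w r = 0" and e: "e > 0"
  shows "\<exists>s1 s2. \<bar>s1 - r\<bar> < e \<and> \<bar>s2 - r\<bar> < e \<and> gg z w s1 > 0 \<and> gg z w s2 < 0"
proof -
  define d where "d = 2*(Im w - Im z)*r + 2*(Re w * Im z - Re z * Im w)"
  define A where "A = Im w - Im z"
  have "Re z \<noteq> Re w \<or> Im z \<noteq> Im w" using zw complex_eq_iff by blast
  hence "(Re z - Re w)^2 + (Im z - Im w)^2 > 0" by (simp add: sum_power2_gt_zero_iff)
  hence "4 * Im z * Im w * ((Re z - Re w)^2 + (Im z - Im w)^2) > 0" using z0 w0 by simp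
  hence "d^2 > 0" using disc_id[of w z r] g unfolding d_def by simp
  hence d0: "d \<noteq> 0" by auto
  define h where "h = min (e/2) (\<bar>d\<bar> / (2*(\<bar>A\<bar>+1)))"
  have h0: "h > 0" unfolding h_def using e d0 by simp
  have he: "h < e" unfolding h_def using e by simp
  have "h * (2*(\<bar>A\<bar>+1)) \<le> \<bar>d\<bar>" unfolding h_def
    by (smt (verit) abs_ge_zero divide_pos_pos min.cobounded2 pos_le_divide_eq)
  hence "2 * (\<bar>A\<bar> * h) < \<bar>d\<bar>" using h0 by (simp add: algebra_simps)
  hence Ah: "2 * \<bar>A * h\<bar> < \<bar>d\<bar>" using h0 by (simp add: abs_mult)
  have p1: "gg z w (r + h) = h * (d + A * h)" using gg_shift[of z w r h] g unfolding d_def A_def by simp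
  have p2: "gg z w (r - h) = - h * (d - A * h)" using gg_shift[of z w r "-h"] g unfolding d_def A_def
    by (simp add: algebra_simps)
  show ?thesis
  proof (cases "d > 0")
    case True
    hence "d + A*h > 0" "d - A*h > 0" using Ah by (auto simp: abs_less_iff abs_if split: if_splits)
    hence "gg z w (r + h) > 0" "gg z w (r - h) < 0" using p1 p2 h0 by auto
    thus ?thesis using h0 he by (intro exI[of _ "r+h"] exI[of _ "r-h"]) auto
  next
    case False
    hence "d < 0" using d0 by simp
    hence "d + A*h < 0" "d - A*h < 0" using Ah by (auto simp: abs_less_iff abs_if split: if_splits)
    hence "gg z w (r - h) > 0" "gg z w (r + h) < 0" using p1 p2 h0
      by (auto simp: mult_pos_neg mult_neg_neg)
    thus ?thesis using h0 he by (intro exI[of _ "r-h"] exI[of _ "r+h"]) auto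
  qed
qed

lemma cont_dH: assumes z0: "Im z > 0"
  shows "continuous_on {x. Im x > 0} (\<lambda>x. dH x z)"
proof -
  have c: "continuous_on {1..} (arcosh::real\<Rightarrow>real)" by (rule continuous_on_arcosh) simp
  have c2: "continuous_on {x. Im x > 0} (\<lambda>x. 1 + (cmod (x - z))\<^sup>2 / (2 * Im x * Im z))"
    using z0 by (intro continuous_intros) auto
  have s: "(\<lambda>x. 1 + (cmod (x - z))\<^sup>2 / (2 * Im x * Im z)) ` {x. Im x > 0} \<subseteq> {1..}"
    using z0 by auto
  show ?thesis unfolding dH_def by (rule continuous_on_compose2[OF c c2 s])
qed

lemma cont_FF: assumes z0: "Im z > 0" and w0: "Im w > 0"
  shows "continuous_on {x. Im x > 0} (FF z w)"
  unfolding FF_def[abs_def] using cont_dH[OF z0] cont_dH[OF w0]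
  by (intro continuous_intros)

lemma ivt_seg:
  assumes z0: "Im z > 0" and w0: "Im w > 0" and a0: "Im a > 0" and b0: "Im b > 0"
    and fa: "FF z w a \<le> k" and fb: "k \<le> FF z w b"
  shows "\<exists>t. 0 \<le> t \<and> t \<le> 1 \<and> FF z w (a + of_real t * (b - a)) = k"
proof -
  have sub: "(\<lambda>t. a + of_real t * (b - a)) ` {0..1} \<subseteq> {x. Im x > 0}"
  proof
    fix y assume "y \<in> (\<lambda>t. a + of_real t * (b - a)) ` {0..1}"
    then obtain t where t: "0 \<le> t" "t \<le> 1" "y = a + of_real t * (b - a)" by auto
    have "Im y = (1 - t) * Im a + t * Im b" unfolding t(3) by (simp add: algebra_simps)
    moreover have "(1 - t) * Im a + t * Im b > 0"
    proof (cases "t = 0")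
      case True thus ?thesis using a0 by simp
    next
      case False thus ?thesis using t a0 b0
        by (intro add_nonneg_pos) auto
    qed
    ultimately show "y \<in> {x. Im x > 0}" by simp
  qed
  have "continuous_on {0..1} (\<lambda>t. FF z w (a + of_real t * (b - a)))"
    by (rule continuous_on_compose2[OF cont_FF[OF z0 w0] _ sub]) (intro continuous_intros)
  from IVT'[of "\<lambda>t. FF z w (a + of_real t * (b - a))" 0 k 1, OF _ _ _ this]
  show ?thesis using fa fb by auto
qed


lemma exist_near:
  assumes z0: "Im z > 0" and w0: "Im w > 0" and zw: "z \<noteq> w" and g: "gg z w r = 0" and e: "e > 0"
  shows "\<exists>x. Im x > 0 \<and> FF z w x = k \<and> cmod (x - of_real r) < e"
proof -
  obtain s1 s2 where s: "\<bar>s1 - r\<bar> < e/2" "\<bar>s2 - r\<bar> < e/2" "gg z w s1 > 0" "gg z w s2 < 0"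
    using sign_change[OF z0 w0 zw g, of "e/2"] e by auto
  obtain \<delta>1 where d1: "\<delta>1 > 0" "\<forall>x. Im x > 0 \<longrightarrow> cmod (x - of_real s1) < \<delta>1 \<longrightarrow> \<bar>k\<bar> + 1 \<le> FF z w x"
    using L1[OF z0 w0 s(3)] by blast
  obtain \<delta>2 where d2: "\<delta>2 > 0" "\<forall>x. Im x > 0 \<longrightarrow> cmod (x - of_real s2) < \<delta>2 \<longrightarrow> FF z w x \<le> - (\<bar>k\<bar> + 1)"
    using L1'[OF z0 w0 s(4)] by blast
  define \<epsilon> where "\<epsilon> = min (min \<delta>1 \<delta>2) (e/2) / 2"
  have \<epsilon>0: "\<epsilon> > 0" "\<epsilon> < \<delta>1" "\<epsilon> < \<delta>2" "\<epsilon> < e/2" unfolding \<epsilon>_def using d1 d2 e by auto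
  define p where "p = Complex s1 \<epsilon>"
  define q where "q = Complex s2 \<epsilon>"
  have "cmod (p - of_real s1) = \<epsilon>" unfolding p_def using \<epsilon>0
    by (simp add: cmod_def)
  hence "\<bar>k\<bar> + 1 \<le> FF z w p" using d1(2) \<epsilon>0 unfolding p_def by fastforce
  hence fp: "k \<le> FF z w p" using abs_ge_self[of k] by linarith
  have "cmod (q - of_real s2) = \<epsilon>" unfolding q_def using \<epsilon>0
    by (simp add: cmod_def)
  hence "FF z w q \<le> - (\<bar>k\<bar> + 1)" using d2(2) \<epsilon>0 unfolding q_def by fastforce
  hence fq: "FF z w q \<le> k" using abs_ge_minus_self[of k] by linarith
  obtain t where t: "0 \<le> t" "t \<le> 1" "FF z w (q + of_real t * (p - q)) = k"
    using ivt_seg[OF z0 w0 _ _ fq fp] \<epsilon>0 unfolding p_def q_def by auto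
  define x where "x = q + of_real t * (p - q)"
  have ix: "Im x = \<epsilon>" unfolding x_def p_def q_def by simp
  have rx: "Re x - r = (1 - t) * (s2 - r) + t * (s1 - r)" unfolding x_def p_def q_def
    by (simp add: algebra_simps)
  have "\<bar>(1 - t) * (s2 - r) + t * (s1 - r)\<bar> \<le> (1 - t) * \<bar>s2 - r\<bar> + t * \<bar>s1 - r\<bar>"
  proof -
    have "\<bar>(1 - t) * (s2 - r) + t * (s1 - r)\<bar> \<le> \<bar>(1 - t) * (s2 - r)\<bar> + \<bar>t * (s1 - r)\<bar>"
      by (rule abs_triangle_ineq)
    also have "\<dots> = (1 - t) * \<bar>s2 - r\<bar> + t * \<bar>s1 - r\<bar>" using t by (simp add: abs_mult)
    finally show ?thesis .
  qed
  also have "\<dots> \<le> (1 - t) * (e/2) + t * (e/2)"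
    using t s by (intro add_mono mult_left_mono) auto
  also have "\<dots> = e/2" by (simp add: field_simps)
  finally have "\<bar>Re x - r\<bar> \<le> e/2" using rx by simp
  hence "cmod (x - of_real r) < e" using cmod_le[of "x - of_real r"] ix \<epsilon>0 by simp
  moreover have "Im x > 0" using ix \<epsilon>0 by simp
  moreover have "FF z w x = k" using t(3) unfolding x_def .
  ultimately show ?thesis by blast
qed

lemma far_aux:
  assumes z0: "Im z > 0" and w0: "Im w > 0" and s: "gg z w s1 > 0" "gg z w s2 < 0"
    and L: "\<bar>s1\<bar> = L" "\<bar>s2\<bar> = L" "L > 0"
  shows "\<exists>x. Im x > 0 \<and> FF z w x = k \<and> L \<le> cmod x"
proof -
  obtain \<delta>1 where d1: "\<delta>1 > 0" "\<forall>x. Im x > 0 \<longrightarrow> cmod (x - of_real s1) < \<delta>1 \<longrightarrow> \<bar>k\<bar> + 1 \<le> FF z w x"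
    using L1[OF z0 w0 s(1)] by blast
  obtain \<delta>2 where d2: "\<delta>2 > 0" "\<forall>x. Im x > 0 \<longrightarrow> cmod (x - of_real s2) < \<delta>2 \<longrightarrow> FF z w x \<le> - (\<bar>k\<bar> + 1)"
    using L1'[OF z0 w0 s(2)] by blast
  define \<epsilon> where "\<epsilon> = min (min \<delta>1 \<delta>2) L / 2"
  have \<epsilon>0: "\<epsilon> > 0" "\<epsilon> < \<delta>1" "\<epsilon> < \<delta>2" "\<epsilon> < L" unfolding \<epsilon>_def using d1 d2 L by auto
  define p where "p = Complex s1 \<epsilon>"
  define q where "q = Complex s2 \<epsilon>"
  define mp where "mp = Complex s1 L"
  define mq where "mq = Complex s2 L"
  have "cmod (p - of_real s1) = \<epsilon>" unfolding p_def using \<epsilon>0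
    by (simp add: cmod_def)
  hence "\<bar>k\<bar> + 1 \<le> FF z w p" using d1(2) \<epsilon>0 unfolding p_def by fastforce
  hence fp: "k \<le> FF z w p" using abs_ge_self[of k] by linarith
  have "cmod (q - of_real s2) = \<epsilon>" unfolding q_def using \<epsilon>0
    by (simp add: cmod_def)
  hence "FF z w q \<le> - (\<bar>k\<bar> + 1)" using d2(2) \<epsilon>0 unfolding q_def by fastforce
  hence fq: "FF z w q \<le> k" using abs_ge_minus_self[of k] by linarith
  have ims: "Im p > 0" "Im q > 0" "Im mp > 0" "Im mq > 0"
    unfolding p_def q_def mp_def mq_def using \<epsilon>0 L by auto
  show ?thesis
  proof (cases "k \<le> FF z w mq")
    case True
    obtain t where t: "0 \<le> t" "t \<le> 1" "FF z w (q + of_real t * (mq - q)) = k"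
      using ivt_seg[OF z0 w0 ims(2) ims(4) fq True] by auto
    define x where "x = q + of_real t * (mq - q)"
    have "Re x = s2" unfolding x_def q_def mq_def by simp
    hence "L \<le> cmod x" using abs_Re_le_cmod[of x] L by simp
    moreover have "Im x = \<epsilon> + t * (L - \<epsilon>)" unfolding x_def q_def mq_def
      by (simp add: algebra_simps)
    hence "Im x > 0" using t \<epsilon>0 mult_nonneg_nonneg[of t "L - \<epsilon>"] by linarith
    ultimately show ?thesis using t(3) unfolding x_def by blast
  next
    case False
    hence fmq: "FF z w mq \<le> k" by simp
    show ?thesis
    proof (cases "k \<le> FF z w mp")
      case True
      obtain t where t: "0 \<le> t" "t \<le> 1" "FF z w (mq + of_real t * (mp - mq)) = k"
        using ivt_seg[OF z0 w0 ims(4) ims(3) fmq True] by auto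
      define x where "x = mq + of_real t * (mp - mq)"
      have "Im x = L" unfolding x_def mp_def mq_def by simp
      hence "L \<le> cmod x" using abs_Im_le_cmod[of x] L by simp
      moreover have "Im x > 0" using \<open>Im x = L\<close> L by simp
      ultimately show ?thesis using t(3) unfolding x_def by blast
    next
      case False
      hence fmp: "FF z w mp \<le> k" by simp
      obtain t where t: "0 \<le> t" "t \<le> 1" "FF z w (mp + of_real t * (p - mp)) = k"
        using ivt_seg[OF z0 w0 ims(3) ims(1) fmp fp] by auto
      define x where "x = mp + of_real t * (p - mp)"
      have "Re x = s1" unfolding x_def p_def mp_def by simp
      hence "L \<le> cmod x" using abs_Re_le_cmod[of x] L by simp
      moreover have "Im x = (1 - t) * L + t * \<epsilon>" unfolding x_def p_def mp_def
        by (simp add: algebra_simps)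
      hence "Im x > 0" using t \<epsilon>0 L
        by (smt (verit) mult_nonneg_nonneg mult_pos_pos)
      ultimately show ?thesis using t(3) unfolding x_def by blast
    qed
  qed
qed

lemma exist_far:
  assumes z0: "Im z > 0" and w0: "Im w > 0" and zw: "z \<noteq> w" and eq: "Im z = Im w"
  shows "\<exists>x. Im x > 0 \<and> FF z w x = k \<and> M \<le> cmod x"
proof -
  define L where "L = max M 0 + \<bar>Re z + Re w\<bar> + 1"
  have L0: "L > 0" "M \<le> L" unfolding L_def by auto
  have rne: "Re z \<noteq> Re w" using zw eq complex_eq_iff by blast
  have ggf: "gg z w s = Im z * (Re w - Re z) * (2*s - Re z - Re w)" for s
    unfolding gg_def using eq by (simp add: power2_eq_square algebra_simps)
  have "max M 0 \<ge> 0" by simp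
  hence p1a: "2*L - Re z - Re w > 0" unfolding L_def
    using abs_ge_self[of "Re z + Re w"] abs_ge_minus_self[of "Re z + Re w"] by (smt (verit))
  have p1b: "2*(-L) - Re z - Re w < 0" unfolding L_def using \<open>max M 0 \<ge> 0\<close>
    using abs_ge_self[of "Re z + Re w"] abs_ge_minus_self[of "Re z + Re w"] by (smt (verit))
  note p1 = p1a p1b
  have c: "Im z * (Re w - Re z) \<noteq> 0" using z0 rne by simp
  show ?thesis
  proof (cases "Im z * (Re w - Re z) > 0")
    case True
    hence "gg z w L > 0" "gg z w (-L) < 0" unfolding ggf using p1
      by (auto simp: mult_pos_neg)
    from far_aux[OF z0 w0 this, of L k] L0 show ?thesis by force
  next
    case False
    hence n: "Im z * (Re w - Re z) < 0" using c by linarith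
    hence "gg z w (-L) > 0" "gg z w L < 0" unfolding ggf using p1
      by (auto simp: mult_neg_neg mult_neg_pos)
    from far_aux[OF z0 w0 this, of L k] L0 show ?thesis by force
  qed
qed


lemma mem_SH: "x \<in> square_hyperbola k z w \<longleftrightarrow> Im x > 0 \<and> FF z w x = k"
  unfolding square_hyperbola_def hyp_plane_def FF_def by auto

lemma some_char:
  assumes z0: "Im z > 0" and w0: "Im w > 0" and zw: "z \<noteq> w"
  shows "(\<exists>X. (\<forall>n. X n \<in> square_hyperbola k z w) \<and> X \<longlonglongrightarrow> complex_of_real r)
         \<longleftrightarrow> gg z w r = 0"
proof
  assume "\<exists>X. (\<forall>n. X n \<in> square_hyperbola k z w) \<and> X \<longlonglongrightarrow> complex_of_real r"
  then obtain X where X: "\<And>n. Im (X n) > 0" "\<And>n. FF z w (X n) = k" and lim: "X \<longlonglongrightarrow> complex_of_real r"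
    unfolding mem_SH by blast
  show "gg z w r = 0"
  proof (rule ccontr)
    assume "gg z w r \<noteq> 0"
    hence "gg z w r > 0 \<or> gg z w r < 0" by linarith
    thus False
    proof
      assume "gg z w r > 0"
      from L1[OF z0 w0 this, of "\<bar>k\<bar> + 1"] obtain \<delta> where
        d: "\<delta> > 0" "\<forall>x. Im x > 0 \<longrightarrow> cmod (x - of_real r) < \<delta> \<longrightarrow> \<bar>k\<bar> + 1 \<le> FF z w x" by blast
      obtain N where "\<forall>n\<ge>N. norm (X n - complex_of_real r) < \<delta>"
        using lim d(1) unfolding LIMSEQ_iff by blast
      hence "norm (X N - complex_of_real r) < \<delta>" by simp
      hence "\<bar>k\<bar> + 1 \<le> FF z w (X N)" using d(2) X(1)[of N] by simp
      thus False using X(2)[of N] abs_ge_self[of k] by linarith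
    next
      assume "gg z w r < 0"
      from L1'[OF z0 w0 this, of "- (\<bar>k\<bar> + 1)"] obtain \<delta> where
        d: "\<delta> > 0" "\<forall>x. Im x > 0 \<longrightarrow> cmod (x - of_real r) < \<delta> \<longrightarrow> FF z w x \<le> - (\<bar>k\<bar> + 1)" by blast
      obtain N where "\<forall>n\<ge>N. norm (X n - complex_of_real r) < \<delta>"
        using lim d(1) unfolding LIMSEQ_iff by blast
      hence "norm (X N - complex_of_real r) < \<delta>" by simp
      hence "FF z w (X N) \<le> - (\<bar>k\<bar> + 1)" using d(2) X(1)[of N] by simp
      thus False using X(2)[of N] abs_ge_minus_self[of k] by linarith
    qed
  qed
next
  assume g: "gg z w r = 0"
  have "\<forall>n. \<exists>x. Im x > 0 \<and> FF z w x = k \<and> cmod (x - of_real r) < 1 / real (Suc n)"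
    using exist_near[OF z0 w0 zw g] by simp
  then obtain X where X: "\<And>n. Im (X n) > 0 \<and> FF z w (X n) = k \<and> cmod (X n - of_real r) < 1 / real (Suc n)"
    by metis
  have "(\<lambda>n. X n - complex_of_real r) \<longlonglongrightarrow> 0"
    by (rule LIMSEQ_norm_0) (use X in blast)
  hence "X \<longlonglongrightarrow> complex_of_real r" unfolding LIM_zero_iff .
  moreover have "\<forall>n. X n \<in> square_hyperbola k z w" unfolding mem_SH using X by blast
  ultimately show "\<exists>X. (\<forall>n. X n \<in> square_hyperbola k z w) \<and> X \<longlonglongrightarrow> complex_of_real r" by blast
qed

lemma none_char:
  assumes z0: "Im z > 0" and w0: "Im w > 0" and zw: "z \<noteq> w"
  shows "(\<exists>X. (\<forall>n. X n \<in> square_hyperbola k z w) \<and> filterlim (\<lambda>n. cmod (X n)) at_top sequentially)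
         \<longleftrightarrow> Im z = Im w"
proof
  assume "\<exists>X. (\<forall>n. X n \<in> square_hyperbola k z w) \<and> filterlim (\<lambda>n. cmod (X n)) at_top sequentially"
  then obtain X where X: "\<And>n. Im (X n) > 0" "\<And>n. FF z w (X n) = k"
    and lim: "filterlim (\<lambda>n. cmod (X n)) at_top sequentially"
    unfolding mem_SH by blast
  have ev: "\<exists>N. B < cmod (X N)" for B
  proof -
    have "eventually (\<lambda>n. B < cmod (X n)) sequentially"
      using lim unfolding filterlim_at_top_dense by blast
    then obtain N where "\<forall>n\<ge>N. B < cmod (X n)" unfolding eventually_sequentially by blast
    thus ?thesis by blast
  qed
  show "Im z = Im w"
  proof (rule ccontr)
    assume "Im z \<noteq> Im w"
    hence "Im z < Im w \<or> Im w < Im z" by linarith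
    thus False
    proof
      assume "Im z < Im w"
      from L2[OF z0 w0 this, of "\<bar>k\<bar> + 1"] obtain B where
        B: "\<forall>x. Im x > 0 \<longrightarrow> B < cmod x \<longrightarrow> \<bar>k\<bar> + 1 \<le> FF z w x" by blast
      obtain N where "B < cmod (X N)" using ev by blast
      hence "\<bar>k\<bar> + 1 \<le> FF z w (X N)" using B X(1)[of N] by simp
      thus False using X(2)[of N] abs_ge_self[of k] by linarith
    next
      assume "Im w < Im z"
      from L2'[OF z0 w0 this, of "- (\<bar>k\<bar> + 1)"] obtain B where
        B: "\<forall>x. Im x > 0 \<longrightarrow> B < cmod x \<longrightarrow> FF z w x \<le> - (\<bar>k\<bar> + 1)" by blast
      obtain N where "B < cmod (X N)" using ev by blast
      hence "FF z w (X N) \<le> - (\<bar>k\<bar> + 1)" using B X(1)[of N] by simp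
      thus False using X(2)[of N] abs_ge_minus_self[of k] by linarith
    qed
  qed
next
  assume eq: "Im z = Im w"
  have "\<forall>n. \<exists>x. Im x > 0 \<and> FF z w x = k \<and> real n \<le> cmod x"
    using exist_far[OF z0 w0 zw eq] by blast
  then obtain X where X: "\<And>n. Im (X n) > 0 \<and> FF z w (X n) = k \<and> real n \<le> cmod (X n)"
    by metis
  have "filterlim (\<lambda>n. cmod (X n)) at_top sequentially"
    by (rule filterlim_at_top_mono[OF filterlim_real_sequentially]) (use X in auto)
  moreover have "\<forall>n. X n \<in> square_hyperbola k z w" unfolding mem_SH using X by blast
  ultimately show "\<exists>X. (\<forall>n. X n \<in> square_hyperbola k z w) \<and> filterlim (\<lambda>n. cmod (X n)) at_top sequentially"
    by blast
qed

lemma endpoints_char: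
  assumes z0: "Im z > 0" and w0: "Im w > 0" and zw: "z \<noteq> w"
  shows "ideal_endpoints (square_hyperbola k z w) =
           {Some r | r. gg z w r = 0} \<union> {None | u::unit. Im z = Im w}"
  unfolding ideal_endpoints_def using some_char[OF z0 w0 zw, of k] none_char[OF z0 w0 zw, of k]
  by auto

lemma equi_eq:
  assumes z0: "Im z > 0" and w0: "Im w > 0"
  shows "equidistant_line z w = square_hyperbola 0 z w"
proof -
  have nn: "dH x u \<ge> 0" if "Im x > 0" "Im u > 0" for x u
    unfolding dH_def using that by (intro arcosh_nonneg_real) auto
  show ?thesis unfolding equidistant_line_def square_hyperbola_def hyp_plane_def
    using nn z0 w0 by auto
qed

theorem mainTheorem2:
  fixes z w :: complex and k :: real
  assumes "z \<in> hyp_plane" and "w \<in> hyp_plane" and "z \<noteq> w"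
  shows "ideal_endpoints (square_hyperbola k z w) = ideal_endpoints (equidistant_line z w)"
proof -
  have z0: "Im z > 0" and w0: "Im w > 0" using assms(1,2) unfolding hyp_plane_def by auto
  show ?thesis unfolding equi_eq[OF z0 w0] endpoints_char[OF z0 w0 assms(3)] ..
qed

end
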